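(* Let $\mathbb{K}$ be a field of characteristic not $2,3$ and let $\mathbb{T}=\mathbb{K}^3$ with multiplication $$x\circ y=\Big(x_1y_1-\tfrac12x_2y_3-\tfrac12x_3y_2,\ x_2y_2-\tfrac12x_1y_3-\tfrac12x_3y_1,\ x_3y_3-\tfrac12x_1y_2-\tfrac12x_2y_1\Big).$$ Then $\mathbb{T}$ is isospectral. If $\mathbb{K}$ is infinite, $\mathbb{T}$ is non-generic. The set of nonzero idempotents of $\mathbb{T}$ is $$\{(x_1,x_2,x_3)\in\mathbb{K}^3:\ x_1^2+x_2^2+x_3^2=x_1+x_2+x_3=1\},$$ and every nonzero idempotent has spectrum $\{1,-\tfrac12,\tfrac12\}$.
   Context: For an idempotent $c$, its spectrum is the multiset of eigenvalues of $L_c:x\mapsto c\circ x$. An algebra is isospectral if all its nonzero idempotents have the same spectrum. A commutative algebra of dimension $n$ is generic if (over an algebraic closure / complexification) it has exactly $2^n$ distinct idempotents (including $0$). *)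

theory Defs
  imports "HOL-Analysis.Analysis" "HOL-Computational_Algebra.Polynomial" "HOL-Library.Multiset"
begin

definition tmul :: "'a::field ^ 3 \<Rightarrow> 'a ^ 3 \<Rightarrow> 'a ^ 3" where
  "tmul x y = vector
     [x$1*y$1 - x$2*y$3/2 - x$3*y$2/2,
      x$2*y$2 - x$1*y$3/2 - x$3*y$1/2,
      x$3*y$3 - x$1*y$2/2 - x$2*y$1/2]"

definition idempotent :: "('v \<Rightarrow> 'v \<Rightarrow> 'v) \<Rightarrow> 'v \<Rightarrow> bool" where
  "idempotent mul c \<longleftrightarrow> mul c c = c"

definition Lmat :: "('a::field ^ 'n \<Rightarrow> 'a ^ 'n \<Rightarrow> 'a ^ 'n) \<Rightarrow> 'a ^ 'n \<Rightarrow> 'a ^ 'n ^ 'n" where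
  "Lmat mul c = (\<chi> i j. (mul c (axis j 1)) $ i)"

definition charpoly :: "'a::field ^ 'n ^ 'n \<Rightarrow> 'a poly" where
  "charpoly A = det (mat [:0, 1:] - (\<chi> i j. [:A $ i $ j:]))"

definition has_spectrum :: "('a::field ^ 'n \<Rightarrow> 'a ^ 'n \<Rightarrow> 'a ^ 'n) \<Rightarrow> 'a ^ 'n \<Rightarrow> 'a multiset \<Rightarrow> bool" where
  "has_spectrum mul c M \<longleftrightarrow> charpoly (Lmat mul c) = (\<Prod>a\<in>#M. [:- a, 1:])"

text \<open>Isospectral: all nonzero idempotents have the same spectrum (multiset of eigenvalues
  over an algebraic closure), equivalently the same characteristic polynomial of L_c.\<close>
definition isospectral :: "('a::field ^ 'n \<Rightarrow> 'a ^ 'n \<Rightarrow> 'a ^ 'n) \<Rightarrow> bool" where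
  "isospectral mul \<longleftrightarrow>
     (\<forall>c d. idempotent mul c \<and> c \<noteq> 0 \<and> idempotent mul d \<and> d \<noteq> 0
        \<longrightarrow> charpoly (Lmat mul c) = charpoly (Lmat mul d))"

definition has_2n_idempotents :: "('a ^ 'n \<Rightarrow> 'a ^ 'n \<Rightarrow> 'a ^ 'n) \<Rightarrow> bool" where
  "has_2n_idempotents mul \<longleftrightarrow>
     finite {c. idempotent mul c} \<and> card {c. idempotent mul c} = 2 ^ CARD('n)"

definition is_alg_closure :: "('a::field \<Rightarrow> 'b::field) \<Rightarrow> bool" where
  "is_alg_closure \<phi> \<longleftrightarrow>
     \<phi> 1 = 1 \<and> (\<forall>x y. \<phi> (x + y) = \<phi> x + \<phi> y) \<and> (\<forall>x y. \<phi> (x * y) = \<phi> x * \<phi> y)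
     \<and> (\<forall>p :: 'b poly. degree p \<ge> 1 \<longrightarrow> (\<exists>z. poly p z = 0))
     \<and> (\<forall>z :: 'b. \<exists>p :: 'a poly. p \<noteq> 0 \<and> poly (map_poly \<phi> p) z = 0)"

end

theory Submission
  imports Defs
begin

lemma tmul_comp:
  fixes c x :: "'a::field ^ 3"
  shows "tmul c x $ 1 = c$1*x$1 - c$2*x$3/2 - c$3*x$2/2"
    "tmul c x $ 2 = c$2*x$2 - c$1*x$3/2 - c$3*x$1/2"
    "tmul c x $ 3 = c$3*x$3 - c$1*x$2/2 - c$2*x$1/2"
  by (simp_all add: tmul_def)

lemma charpoly_T:
  fixes c :: "'a::field ^ 3"
  assumes "(2::'a) \<noteq> 0"
  shows "charpoly (Lmat tmul c) = [: -(c$1*c$2*c$3 - c$1*c$2*c$3/4 - (c$1^3+c$2^3+c$3^3)/4),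
     c$1*c$2 + c$1*c$3 + c$2*c$3 - (c$1^2+c$2^2+c$3^2)/4, -(c$1+c$2+c$3), 1:]"
proof -
  have "(4::'a) \<noteq> 0" "(8::'a) \<noteq> 0" "(16::'a) \<noteq> 0" "(32::'a) \<noteq> 0" "(64::'a) \<noteq> 0" "(128::'a) \<noteq> 0" "(256::'a) \<noteq> 0" using assms
    by (metis mult_2 mult_eq_0_iff numeral_Bit0)+
  then show ?thesis
    unfolding charpoly_def Lmat_def det_3
    apply (simp add: tmul_comp axis_def mat_def)
    using assms by (simp add: field_simps power2_eq_square power3_eq_cube)
qed

lemma half_cancel:
  fixes x y z :: "'a::field"
  assumes "(2::'a) \<noteq> 0"
  shows "x - y*z/2 - z*y/2 = x - y*z"
proof -
  have "y*z/2 + z*y/2 = y*z" using assms by (simp add: field_simps)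
  thus ?thesis by (simp add: algebra_simps)
qed

lemma idem_iff:
  fixes c :: "'a::field ^ 3"
  assumes "(2::'a) \<noteq> 0"
  shows "idempotent tmul c \<longleftrightarrow> c$1^2 - c$2*c$3 = c$1 \<and> c$2^2 - c$1*c$3 = c$2 \<and> c$3^2 - c$1*c$2 = c$3"
  unfolding idempotent_def vec_eq_iff forall_3 tmul_comp
  using assms by (simp add: half_cancel[OF assms] power2_eq_square)

lemma idem_nz_iff:
  fixes c :: "'a::field ^ 3"
  assumes two: "(2::'a) \<noteq> 0" and three: "(3::'a) \<noteq> 0"
  shows "idempotent tmul c \<and> c \<noteq> 0 \<longleftrightarrow> (c$1)^2 + (c$2)^2 + (c$3)^2 = 1 \<and> c$1 + c$2 + c$3 = 1"
proof
  assume h: "idempotent tmul c \<and> c \<noteq> 0"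
  hence e1: "c$1^2 - c$2*c$3 = c$1" and e2: "c$2^2 - c$1*c$3 = c$2" and e3: "c$3^2 - c$1*c$2 = c$3"
    using idem_iff[OF two] by auto
  have d12: "(c$1 - c$2) * (c$1 + c$2 + c$3 - 1) = 0"
    using e1 e2 by (simp add: algebra_simps power2_eq_square)
  have d13: "(c$1 - c$3) * (c$1 + c$2 + c$3 - 1) = 0"
    using e1 e3 by (simp add: algebra_simps power2_eq_square)
  have s: "c$1 + c$2 + c$3 = 1"
  proof (rule ccontr)
    assume "c$1 + c$2 + c$3 \<noteq> 1"
    hence "c$1 = c$2" "c$1 = c$3" using d12 d13 by auto
    hence "c$1 = 0" using e1 by (simp add: power2_eq_square)
    hence "c = 0" using \<open>c$1 = c$2\<close> \<open>c$1 = c$3\<close> by (simp add: vec_eq_iff forall_3)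
    thus False using h by simp
  qed
  have "3 * ((c$1)^2 + (c$2)^2 + (c$3)^2) = 3"
  proof -
    have a: "(c$1)^2 + (c$2)^2 + (c$3)^2 - (c$1*c$2 + c$1*c$3 + c$2*c$3) = 1"
      using e1 e2 e3 s by (simp add: algebra_simps)
    have b: "(c$1 + c$2 + c$3)^2 = (c$1)^2 + (c$2)^2 + (c$3)^2 + 2*(c$1*c$2 + c$1*c$3 + c$2*c$3)"
      by (simp add: power2_eq_square algebra_simps)
    show ?thesis using a b s by (simp add: algebra_simps)
  qed
  with three s show "(c$1)^2 + (c$2)^2 + (c$3)^2 = 1 \<and> c$1 + c$2 + c$3 = 1"
    by (metis mult_cancel_left mult.right_neutral)
next
  assume h: "(c$1)^2 + (c$2)^2 + (c$3)^2 = 1 \<and> c$1 + c$2 + c$3 = 1"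
  hence c3: "c$3 = 1 - c$1 - c$2" and q: "(c$1)^2 + (c$2)^2 + (c$3)^2 = 1" by (auto simp: algebra_simps)
  have q': "(c$1)^2 + (c$2)^2 + c$1*c$2 - c$1 - c$2 = 0"
  proof -
    have "2 * ((c$1)^2 + (c$2)^2 + c$1*c$2 - c$1 - c$2) = 2 * 0"
      using q unfolding c3 by (simp add: power2_eq_square algebra_simps)
    thus ?thesis using two by (metis mult_cancel_left)
  qed
  have "c$1^2 - c$2*c$3 = c$1 \<and> c$2^2 - c$1*c$3 = c$2 \<and> c$3^2 - c$1*c$2 = c$3"
    using q' unfolding c3 by (simp add: power2_eq_square algebra_simps)
  moreover have "c \<noteq> 0" using h by auto
  ultimately show "idempotent tmul c \<and> c \<noteq> 0" using idem_iff[OF two] by auto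
qed

lemma spectrum_T:
  fixes c :: "'a::field ^ 3"
  assumes two: "(2::'a) \<noteq> 0" and three: "(3::'a) \<noteq> 0"
    and h: "idempotent tmul c \<and> c \<noteq> 0"
  shows "charpoly (Lmat tmul c) = [:1/4, -1/4, -1, 1:]"
proof -
  have q: "(c$1)^2 + (c$2)^2 + (c$3)^2 = 1" and s: "c$1 + c$2 + c$3 = 1"
    using idem_nz_iff[OF two three] h by auto
  have "2 * (c$1*c$2 + c$1*c$3 + c$2*c$3) = 2 * 0"
  proof -
    have "(c$1 + c$2 + c$3)^2 = (c$1)^2 + (c$2)^2 + (c$3)^2 + 2*(c$1*c$2 + c$1*c$3 + c$2*c$3)"
      by (simp add: power2_eq_square algebra_simps)
    thus ?thesis using q s by simp
  qed
  hence e: "c$1*c$2 + c$1*c$3 + c$2*c$3 = 0" using two by (metis mult_cancel_left)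
  have cub: "c$1^3+c$2^3+c$3^3 = (c$1 + c$2 + c$3)^3 - 3*(c$1 + c$2 + c$3)*(c$1*c$2 + c$1*c$3 + c$2*c$3) + 3*(c$1*c$2*c$3)"
    by (simp add: power3_eq_cube algebra_simps)
  have cub': "c$1^3+c$2^3+c$3^3 = 1 + 3*(c$1*c$2*c$3)"
    using cub s e by simp
  have "(4::'a) \<noteq> 0" using two by (metis mult_2 mult_eq_0_iff numeral_Bit0)
  then show ?thesis
    unfolding charpoly_T[OF two] cub' q s e
    by (simp add: field_simps)
qed

lemma prod_spec:
  "(\<Prod>a\<in>#{#1, -1/2, 1/2#}. [:- a, 1:]) = ([:1/4, -1/4, -1, 1:] :: 'a::field poly)"
  apply simp
  done

lemma nongeneric:
  fixes \<phi> :: "'a::field \<Rightarrow> 'b::field"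
  assumes two: "(2::'a) \<noteq> 0" and inf: "infinite (UNIV :: 'a set)" and alg: "is_alg_closure \<phi>"
  shows "\<not> has_2n_idempotents (tmul :: 'b ^ 3 \<Rightarrow> 'b ^ 3 \<Rightarrow> 'b ^ 3)"
proof -
  have one: "\<phi> 1 = 1" and add: "\<And>x y. \<phi> (x + y) = \<phi> x + \<phi> y"
    and mul: "\<And>x y. \<phi> (x * y) = \<phi> x * \<phi> y"
    and root: "\<And>p :: 'b poly. degree p \<ge> 1 \<Longrightarrow> \<exists>z. poly p z = 0"
    using alg unfolding is_alg_closure_def by auto
  have nz: "\<phi> x \<noteq> 0" if "x \<noteq> 0" for x
  proof
    assume "\<phi> x = 0"
    hence "\<phi> (x * inverse x) = 0" by (simp add: mul)
    thus False using that one by simp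
  qed
  have injphi: "inj \<phi>"
  proof (rule injI)
    fix x y assume "\<phi> x = \<phi> y"
    hence "\<phi> (x - y) = 0" using add[of "x - y" y] by simp
    thus "x = y" using nz[of "x - y"] by auto
  qed
  have infb: "infinite (UNIV :: 'b set)"
    using inf injphi finite_imageD[of \<phi> UNIV] finite_subset[of "range \<phi>" UNIV] by auto
  have twob: "(2::'b) \<noteq> 0"
  proof -
    have "\<phi> 2 = 2" using add[of 1 1] one by simp
    thus ?thesis using nz[OF two] by simp
  qed
  define r where "r a = (SOME z. poly [:a^2 - a, a - 1, 1:] z = 0)" for a :: 'b
  have r: "poly [:a^2 - a, a - 1, 1:] (r a) = 0" for a
  proof -
    have "\<exists>z. poly [:a^2 - a, a - 1, 1:] z = 0" by (rule root) simp
    thus ?thesis unfolding r_def by (rule someI_ex)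
  qed
  define f where "f a = (vector [a, r a, 1 - a - r a] :: 'b ^ 3)" for a
  have idf: "idempotent tmul (f a)" for a
  proof -
    have "a^2 - a + (a - 1) * r a + (r a)^2 = 0" using r[of a] by (simp add: algebra_simps power2_eq_square)
    thus ?thesis unfolding idem_iff[OF twob] f_def
      by (simp add: algebra_simps power2_eq_square)
  qed
  have "inj f"
  proof (rule injI)
    fix x y assume "f x = f y"
    hence "f x $ 1 = f y $ 1" by simp
    thus "x = y" unfolding f_def by simp
  qed
  hence "infinite (range f)" using infb by (meson finite_imageD)
  moreover have "range f \<subseteq> {c. idempotent tmul c}" using idf by auto
  ultimately have "infinite {c :: 'b^3. idempotent tmul c}" using finite_subset by blast
  thus ?thesis unfolding has_2n_idempotents_def by auto
qed

theorem proposition9p6: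
  fixes \<phi> :: "'a::field \<Rightarrow> 'b::field"
  assumes char2: "(2::'a) \<noteq> 0" and char3: "(3::'a) \<noteq> 0"
  shows "isospectral (tmul :: 'a ^ 3 \<Rightarrow> 'a ^ 3 \<Rightarrow> 'a ^ 3)
    \<and> (infinite (UNIV :: 'a set) \<and> is_alg_closure \<phi>
           \<longrightarrow> \<not> has_2n_idempotents (tmul :: 'b ^ 3 \<Rightarrow> 'b ^ 3 \<Rightarrow> 'b ^ 3))
    \<and> {x :: 'a ^ 3. idempotent tmul x \<and> x \<noteq> 0} =
           {x. (x$1)^2 + (x$2)^2 + (x$3)^2 = 1 \<and> x$1 + x$2 + x$3 = 1}
    \<and> (\<forall>c :: 'a ^ 3. idempotent tmul c \<and> c \<noteq> 0 \<longrightarrow> has_spectrum tmul c {#1, -1/2, 1/2#})"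
proof (intro conjI impI allI)
  show "isospectral (tmul :: 'a ^ 3 \<Rightarrow> 'a ^ 3 \<Rightarrow> 'a ^ 3)"
    unfolding isospectral_def using spectrum_T[OF char2 char3] by metis
  show "\<not> has_2n_idempotents (tmul :: 'b ^ 3 \<Rightarrow> 'b ^ 3 \<Rightarrow> 'b ^ 3)"
    if "infinite (UNIV :: 'a set) \<and> is_alg_closure \<phi>"
    using nongeneric[OF char2, of \<phi>] that by blast
  show "{x :: 'a ^ 3. idempotent tmul x \<and> x \<noteq> 0} =
           {x. (x$1)^2 + (x$2)^2 + (x$3)^2 = 1 \<and> x$1 + x$2 + x$3 = 1}"
    using idem_nz_iff[OF char2 char3] by blast
  fix c :: "'a ^ 3"
  assume "idempotent tmul c \<and> c \<noteq> 0"
  thus "has_spectrum tmul c {#1, -1/2, 1/2#}"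
    unfolding has_spectrum_def prod_spec using spectrum_T[OF char2 char3] by blast
qed

end
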